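(* For $y>0$, the function $$p_a(y)=\frac{a}{a-1}\,\frac{\gamma(a,y)}{\gamma(a-1,y)}$$ is increasing as a function of $a$ for $a>1$.
   Context: $\gamma(a,y)=\int_0^y t^{a-1}e^{-t}\,dt$ is the lower incomplete gamma function. *)

theory Defs
  imports "HOL-Analysis.Analysis"
begin

definition lower_inc_gamma :: "real \<Rightarrow> real \<Rightarrow> real" where
  "lower_inc_gamma a y = integral {0..y} (\<lambda>t. t powr (a - 1) * exp (- t))"

definition p_fun :: "real \<Rightarrow> real \<Rightarrow> real" where
  "p_fun a y = (a / (a - 1)) * (lower_inc_gamma a y / lower_inc_gamma (a - 1) y)"

end

theory Submission
  imports Defs
begin

lemma cont_powr0:
  assumes "s > 0"
  shows "continuous_on {0..y} (\<lambda>t::real. t powr s)"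
  by (rule continuous_on_powr') (use assms in \<open>auto intro: continuous_intros\<close>)

lemma cont_g:
  assumes "s > 0"
  shows "continuous_on {0..y} (\<lambda>t::real. t powr s * exp (- t))"
  by (intro continuous_intros cont_powr0 assms)

lemma gamma_has_int:
  assumes "s > 0"
  shows "((\<lambda>t. t powr s * exp (- t)) has_integral lower_inc_gamma (s+1) y) {0..y}"
proof -
  have "(\<lambda>t::real. t powr s * exp (- t)) integrable_on {0..y}"
    using cont_g[OF assms] integrable_continuous_real by blast
  then show ?thesis unfolding lower_inc_gamma_def by (simp add: integrable_integral)
qed

lemma gamma_nonneg:
  assumes "s > 0"
  shows "lower_inc_gamma (s+1) y \<ge> 0"
  by (rule has_integral_nonneg[OF gamma_has_int[OF assms]]) auto

lemma ibp:
  assumes "s > 0" "y > 0"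
  shows "s * lower_inc_gamma s y = y powr s * exp (- y) + lower_inc_gamma (s+1) y"
proof -
  define F where "F = (\<lambda>t::real. t powr s * exp (- t))"
  have "((\<lambda>t. s * t powr (s-1) * exp (- t) - t powr s * exp (- t)) has_integral (F y - F 0)) {0..y}"
  proof (rule fundamental_theorem_of_calculus_interior)
    show "0 \<le> y" using assms by simp
    show "continuous_on {0..y} F" unfolding F_def by (rule cont_g[OF assms(1)])
    fix x assume x: "x \<in> {0<..<y}"
    have "(F has_real_derivative (s * x powr (s-1) * exp (- x) - x powr s * exp (- x))) (at x)"
      unfolding F_def using x
      by (auto intro!: derivative_eq_intros has_real_derivative_powr simp: algebra_simps)
    then show "(F has_vector_derivative (s * x powr (s-1) * exp (- x) - x powr s * exp (- x))) (at x)"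
      by (simp add: has_real_derivative_iff_has_vector_derivative)
  qed
  note h = this
  have "((\<lambda>t. s * t powr (s-1) * exp (- t)) has_integral (y powr s * exp (- y) + lower_inc_gamma (s+1) y)) {0..y}"
  proof -
    have "((\<lambda>t. (s * t powr (s-1) * exp (- t) - t powr s * exp (- t)) + t powr s * exp (- t)) has_integral (F y - F 0 + lower_inc_gamma (s+1) y)) {0..y}"
      by (rule has_integral_add[OF h gamma_has_int[OF assms(1)]])
    moreover have "F y - F 0 = y powr s * exp (- y)" unfolding F_def by simp
    ultimately show ?thesis by simp
  qed
  then have "((\<lambda>t. (1/s) * (s * t powr (s-1) * exp (- t))) has_integral (1/s) * (y powr s * exp (- y) + lower_inc_gamma (s+1) y)) {0..y}"
    by (rule has_integral_mult_right)
  then have "((\<lambda>t. t powr (s-1) * exp (- t)) has_integral (1/s) * (y powr s * exp (- y) + lower_inc_gamma (s+1) y)) {0..y}"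
    using assms by simp
  then have "lower_inc_gamma s y = (1/s) * (y powr s * exp (- y) + lower_inc_gamma (s+1) y)"
    unfolding lower_inc_gamma_def by (rule integral_unique)
  then show ?thesis using assms by simp
qed

lemma gamma_has_int':
  assumes "x > 1"
  shows "((\<lambda>t. t powr (x-1) * exp (- t)) has_integral lower_inc_gamma x y) {0..y}"
  using gamma_has_int[of "x-1" y] assms by simp

lemma key_id:
  assumes "x > 1"
  shows "((\<lambda>t. (t-c) * t powr (x-1) * exp (- t)) has_integral
          (lower_inc_gamma (x+1) y - c * lower_inc_gamma x y)) {0..y}"
proof -
  have "((\<lambda>t. t powr x * exp (- t) - c * (t powr (x-1) * exp (- t))) has_integral
          (lower_inc_gamma (x+1) y - c * lower_inc_gamma x y)) {0..y}"
    by (intro has_integral_diff has_integral_mult_right gamma_has_int' gamma_has_int) (use assms in auto)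
  moreover have "t powr x * exp (- t) - c * (t powr (x-1) * exp (- t)) = (t-c) * t powr (x-1) * exp (- t)"
    if "t \<in> {0..y}" for t
  proof -
    have "t powr x = t * t powr (x-1)"
    proof (cases "t = 0")
      case False
      then have "t > 0" using that by auto
      then show ?thesis by (simp add: powr_mult_base)
    qed simp
    then show ?thesis by (simp add: algebra_simps)
  qed
  ultimately show ?thesis by (rule has_integral_eq[rotated])
qed

lemma prod_nonneg:
  fixes t c d :: real
  assumes "t \<ge> 0" "c \<ge> 0" "d > 0"
  shows "(t - c) * (t powr d - c powr d) \<ge> 0"
proof (cases "t \<le> c")
  case True
  then have "t powr d \<le> c powr d" using assms by (intro powr_mono2) auto
  then show ?thesis using True by (simp add: mult_nonpos_nonpos)
next
  case False
  then have "c powr d \<le> t powr d" using assms by (intro powr_mono2) auto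
  then show ?thesis using False by simp
qed

lemma prod_pos:
  fixes t c d :: real
  assumes "t > 0" "c \<ge> 0" "d > 0" "t \<noteq> c"
  shows "(t - c) * (t powr d - c powr d) > 0"
proof (cases "t < c")
  case True
  then have "t powr d < c powr d" using assms by (intro powr_less_mono2) auto
  then show ?thesis using True by (simp add: mult_neg_neg)
next
  case False
  then have "c < t" using assms by auto
  then have "c powr d < t powr d" using assms by (intro powr_less_mono2) auto
  then show ?thesis using \<open>c < t\<close> by simp
qed

lemma main_ineq:
  fixes y a b :: real
  assumes y: "y > 0" and ab: "1 < a" "a < b"
  defines "N \<equiv> \<lambda>x. y powr x * exp (- y) + lower_inc_gamma (x+1) y"
  defines "D \<equiv> \<lambda>x. y powr (x-1) * exp (- y) + lower_inc_gamma x y"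
  shows "N a / D a < N b / D b"
proof -
  have Dpos: "D x > 0" if "x > 1" for x
  proof -
    have "lower_inc_gamma x y \<ge> 0" using gamma_nonneg[of "x-1" y] that by simp
    moreover have "y powr (x-1) * exp (- y) > 0" using y by simp
    ultimately show ?thesis unfolding D_def by linarith
  qed
  have Npos: "N x > 0" if "x > 1" for x
  proof -
    have "lower_inc_gamma (x+1) y \<ge> 0" using gamma_nonneg[of "x" y] that by simp
    moreover have "y powr x * exp (- y) > 0" using y by simp
    ultimately show ?thesis unfolding N_def by linarith
  qed
  define c where "c = N a / D a"
  have c0: "c > 0" unfolding c_def using Npos Dpos ab by simp
  define d where "d = b - a"
  have d0: "d > 0" using ab unfolding d_def by simp
  define Ia where "Ia = lower_inc_gamma (a+1) y - c * lower_inc_gamma a y"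
  define Ib where "Ib = lower_inc_gamma (b+1) y - c * lower_inc_gamma b y"
  have Ea: "exp (- y) * y powr (a-1) * (y - c) + Ia = 0"
  proof -
    have "N a - c * D a = 0" unfolding c_def using Dpos[OF ab(1)] by simp
    moreover have "y powr a = y * y powr (a-1)" using y by (simp add: powr_mult_base)
    ultimately show ?thesis unfolding N_def D_def Ia_def by (simp add: algebra_simps)
  qed
  have Eb: "N b - c * D b = exp (- y) * y powr (b-1) * (y - c) + Ib"
  proof -
    have "y powr b = y * y powr (b-1)" using y by (simp add: powr_mult_base)
    then show ?thesis unfolding N_def D_def Ib_def by (simp add: algebra_simps)
  qed
  define h where "h = (\<lambda>t. (t-c) * (t powr d - c powr d) * t powr (a-1) * exp (- t))"
  have hint: "(h has_integral (Ib - c powr d * Ia)) {0..y}"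
  proof -
    have "((\<lambda>t. (t-c) * t powr (b-1) * exp (- t) - c powr d * ((t-c) * t powr (a-1) * exp (- t)))
           has_integral (Ib - c powr d * Ia)) {0..y}"
      unfolding Ia_def Ib_def
      by (intro has_integral_diff has_integral_mult_right key_id) (use ab in auto)
    moreover have "(t-c) * t powr (b-1) * exp (- t) - c powr d * ((t-c) * t powr (a-1) * exp (- t)) = h t" for t
    proof -
      have "t powr (b-1) = t powr d * t powr (a-1)"
        unfolding d_def by (simp add: powr_add[symmetric])
      then show ?thesis unfolding h_def by (simp add: algebra_simps)
    qed
    ultimately show ?thesis by simp
  qed
  have hcont: "continuous_on {0..y} h"
    unfolding h_def using d0 ab
    by (intro continuous_intros cont_powr0) auto
  have hnn: "h t \<ge> 0" if "t \<in> {0..y}" for t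
  proof -
    have "(t - c) * (t powr d - c powr d) \<ge> 0" using prod_nonneg[of t c d] that c0 d0 by auto
    moreover have "t powr (a-1) * exp (- t) \<ge> 0" by simp
    ultimately show ?thesis unfolding h_def
      by (metis mult.assoc mult_nonneg_nonneg)
  qed
  define t0 where "t0 = (if c = y/2 then y/4 else y/2)"
  have t0: "t0 \<in> {0..y}" "t0 > 0" "t0 \<noteq> c" unfolding t0_def using y by auto
  have "h t0 > 0"
  proof -
    have "(t0 - c) * (t0 powr d - c powr d) > 0" using prod_pos[of t0 c d] t0 c0 d0 by auto
    moreover have "t0 powr (a-1) * exp (- t0) > 0" using t0 by simp
    ultimately show ?thesis unfolding h_def
      by (metis mult.assoc mult_pos_pos)
  qed
  then have "integral {0..y} h \<noteq> 0"
    using integral_eq_0_iff[OF hcont y] hnn t0 by fastforce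
  moreover have "integral {0..y} h \<ge> 0"
    using hint hnn by (intro integral_nonneg) auto
  ultimately have "Ib - c powr d * Ia > 0" using integral_unique[OF hint] by simp
  moreover have "exp (- y) * y powr (a-1) * (y - c) * (y powr d - c powr d) \<ge> 0"
  proof -
    have "(y - c) * (y powr d - c powr d) \<ge> 0" using prod_nonneg[of y c d] y c0 d0 by simp
    moreover have "exp (- y) * y powr (a-1) \<ge> 0" by simp
    ultimately have "(exp (- y) * y powr (a-1)) * ((y - c) * (y powr d - c powr d)) \<ge> 0"
      by (rule mult_nonneg_nonneg[rotated])
    then show ?thesis by (simp add: mult.assoc)
  qed
  moreover have yp: "y powr (b-1) = y powr d * y powr (a-1)"
    unfolding d_def by (simp add: powr_add[symmetric])
  moreover have "exp (- y) * y powr (b-1) * (y - c) + Ib =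
     exp (- y) * y powr (a-1) * (y - c) * (y powr d - c powr d) + (Ib - c powr d * Ia)
     + c powr d * (exp (- y) * y powr (a-1) * (y - c) + Ia)"
    unfolding yp by (simp add: algebra_simps)
  ultimately have "N b - c * D b > 0"
    using Eb Ea by simp
  then show ?thesis unfolding c_def[symmetric] using Dpos[of b] ab
    by (simp add: field_simps)
qed

theorem theorem8:
  fixes y :: real
  assumes "y > 0"
  shows "strict_mono_on {1<..} (\<lambda>a. p_fun a y)"
proof (rule strict_mono_onI)
  have pf: "p_fun a y = (y powr a * exp (- y) + lower_inc_gamma (a+1) y) /
                        (y powr (a-1) * exp (- y) + lower_inc_gamma a y)" if "a > 1" for a
  proof -
    have e1: "a * lower_inc_gamma a y = y powr a * exp (- y) + lower_inc_gamma (a+1) y"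
      using ibp[of a y] assms that by simp
    have e2: "(a-1) * lower_inc_gamma (a-1) y = y powr (a-1) * exp (- y) + lower_inc_gamma a y"
      using ibp[of "a-1" y] assms that by simp
    have "lower_inc_gamma a y \<ge> 0" using gamma_nonneg[of "a-1" y] that by simp
    moreover have "y powr (a-1) * exp (- y) > 0" using assms by simp
    ultimately have "(a-1) * lower_inc_gamma (a-1) y \<noteq> 0" using e2 by linarith
    then have nz: "lower_inc_gamma (a-1) y \<noteq> 0" by simp
    have "p_fun a y = (a * lower_inc_gamma a y) / ((a-1) * lower_inc_gamma (a-1) y)"
      unfolding p_fun_def by simp
    then show ?thesis using e1 e2 by simp
  qed
  fix r s :: real assume "r \<in> {1<..}" "s \<in> {1<..}" "r < s"
  then show "p_fun r y < p_fun s y"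
    using pf main_ineq[OF assms, of r s] by simp
qed

end
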